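(* Let $n\ge1$, let $\mathcal{S}$ be a discrete subgroup of $O(n+1)$ satisfying the spanning property, and let $f$ be a measurable $\mathcal{S}$-invariant function with $c_1\le f\le c_2$ ($c_1,c_2>0$). Let $C(n,p,f,\mathcal{S})=\sup_{\Omega\in\mathcal{K}_0(\mathcal{S})}\mathcal{F}_p(\Omega)$ and $C(n,-\infty,\mathcal{S})=\sup_{\Omega\in\mathcal{K}_0(\mathcal{S})}\mathcal{F}_{-\infty}(\Omega)$. Then $C(n,p,f,\mathcal{S})\to C(n,-\infty,\mathcal{S})$ as $p\to-\infty$. Moreover, if $\Omega^{(p)}$ ($p<-n-1$) are maximizers of $V$ over $\mathcal{K}_p(\mathcal{S})$ and $\Omega^{(-\infty)}$ is a Hausdorff limit of $\Omega^{(p)}$ along a sequence $p\to-\infty$, then $\Omega^{(-\infty)}$ is a maximizer of $\mathcal{F}_{-\infty}$ on $\mathcal{K}_0(\mathcal{S})$.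
   Context: $\mathcal{K}_0(\mathcal{S})$: convex bodies in $\mathbb{R}^{n+1}$ containing the origin and invariant under $\mathcal{S}$; $h_\Omega$ support function; $V(\Omega)=(n+1)|\Omega|$; $\mathcal{F}_p(\Omega)=V(\Omega)\big(\int_{\mathbb{S}^n}fh_\Omega^p/\int_{\mathbb{S}^n}f\big)^{-(n+1)/p}$; $\mathcal{F}_{-\infty}(\Omega)=V(\Omega)/(\min_{\mathbb{S}^n}h_\Omega)^{n+1}$; $\mathcal{K}_p(\mathcal{S})=\{\Omega\in\mathcal{K}_0(\mathcal{S}):\int fh_\Omega^p=\int f\}$. Spanning property: for every $a\in\mathbb{S}^n$, $\mathrm{conv}\{\phi(a):\phi\in\mathcal{S}\}$ is a non-degenerate $(n+1)$-dimensional polytope. *)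

theory Defs
  imports "HOL-Analysis.Analysis"
begin

text \<open>Ambient space: R^(n+1) is modelled by a Euclidean space 'a with DIM('a) = n+1.
  The unit sphere S^n is sphere 0 1.\<close>

definition orth_subgroup :: "('a::euclidean_space \<Rightarrow> 'a) set \<Rightarrow> bool" where
  "orth_subgroup S \<longleftrightarrow>
     (\<forall>\<phi>\<in>S. orthogonal_transformation \<phi>) \<and> id \<in> S \<and>
     (\<forall>\<phi>\<in>S. \<forall>\<psi>\<in>S. \<phi> \<circ> \<psi> \<in> S) \<and> (\<forall>\<phi>\<in>S. inv \<phi> \<in> S)"

definition discrete_orth_subgroup :: "('a::euclidean_space \<Rightarrow> 'a) set \<Rightarrow> bool" where
  "discrete_orth_subgroup S \<longleftrightarrow> orth_subgroup S \<and>
     (\<forall>\<phi>\<in>S. \<exists>e>0. \<forall>\<psi>\<in>S. \<psi> \<noteq> \<phi> \<longrightarrow> onorm (\<lambda>x. \<psi> x - \<phi> x) \<ge> e)"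

definition spanning_property :: "('a::euclidean_space \<Rightarrow> 'a) set \<Rightarrow> bool" where
  "spanning_property S \<longleftrightarrow>
     (\<forall>a\<in>sphere 0 1. polytope (convex hull ((\<lambda>\<phi>. \<phi> a) ` S)) \<and>
        aff_dim (convex hull ((\<lambda>\<phi>. \<phi> a) ` S)) = int DIM('a))"

text \<open>Integral over the unit sphere with respect to the standard surface measure,
  expressed through the cone identity
  int_{S^n} g d sigma = (n+1) int_{B^{n+1}} g(x/|x|) dx.\<close>
definition sphere_int :: "('a::euclidean_space \<Rightarrow> real) \<Rightarrow> real" where
  "sphere_int g = real DIM('a) * (LINT x : ball 0 1 | lborel. g (x /\<^sub>R norm x))"

definition support_fun :: "'a::euclidean_space set \<Rightarrow> 'a \<Rightarrow> real" where
  "support_fun K u = (SUP x\<in>K. x \<bullet> u)"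

definition convex_body :: "'a::euclidean_space set \<Rightarrow> bool" where
  "convex_body K \<longleftrightarrow> compact K \<and> convex K \<and> interior K \<noteq> {}"

definition K0 :: "('a::euclidean_space \<Rightarrow> 'a) set \<Rightarrow> 'a set set" where
  "K0 S = {K. convex_body K \<and> 0 \<in> K \<and> (\<forall>\<phi>\<in>S. \<phi> ` K = K)}"

definition Vol :: "'a::euclidean_space set \<Rightarrow> real" where
  "Vol K = real DIM('a) * measure lebesgue K"

definition Fp :: "real \<Rightarrow> ('a::euclidean_space \<Rightarrow> real) \<Rightarrow> 'a set \<Rightarrow> real" where
  "Fp p f K = Vol K *
     (sphere_int (\<lambda>u. f u * support_fun K u powr p) / sphere_int f) powr (- real DIM('a) / p)"

definition Fminf :: "'a::euclidean_space set \<Rightarrow> real" where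
  "Fminf K = Vol K / (Inf (support_fun K ` sphere 0 1)) ^ DIM('a)"

definition Kp :: "real \<Rightarrow> ('a::euclidean_space \<Rightarrow> real) \<Rightarrow> ('a \<Rightarrow> 'a) set \<Rightarrow> 'a set set" where
  "Kp p f S = {K \<in> K0 S. sphere_int (\<lambda>u. f u * support_fun K u powr p) = sphere_int f}"

definition hausdorff_dist :: "'a::euclidean_space set \<Rightarrow> 'a set \<Rightarrow> real" where
  "hausdorff_dist A B = max (SUP a\<in>A. infdist a B) (SUP b\<in>B. infdist b A)"

end

theory Submission
  imports Defs
begin

lemma sf_basic:
  fixes K :: "'a::euclidean_space set"
  assumes "compact K" "K \<noteq> {}"
  shows sf_bdd: "bdd_above ((\<lambda>x. x \<bullet> u) ` K)"
    and sf_ge: "\<And>x. x \<in> K \<Longrightarrow> x \<bullet> u \<le> support_fun K u"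
    and sf_att: "\<exists>x\<in>K. support_fun K u = x \<bullet> u"
proof -
  have c: "continuous_on K (\<lambda>x. x \<bullet> u)" by (intro continuous_intros)
  obtain x0 where x0: "x0 \<in> K" "\<And>y. y \<in> K \<Longrightarrow> y \<bullet> u \<le> x0 \<bullet> u"
    using compact_attains_sup[OF compact_continuous_image[OF c assms(1)]] assms(2) by auto
  show b: "bdd_above ((\<lambda>x. x \<bullet> u) ` K)" using x0 by (auto intro!: bdd_aboveI)
  show "\<And>x. x \<in> K \<Longrightarrow> x \<bullet> u \<le> support_fun K u"
    unfolding support_fun_def using b by (auto intro: cSUP_upper)
  have "support_fun K u = x0 \<bullet> u"
    unfolding support_fun_def using x0 by (intro cSup_eq_maximum) auto
  then show "\<exists>x\<in>K. support_fun K u = x \<bullet> u" using x0 by auto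
qed

lemma sf_lip:
  fixes K :: "'a::euclidean_space set"
  assumes "compact K" "K \<noteq> {}"
  obtains R where "R \<ge> 0" "\<And>u v. \<bar>support_fun K u - support_fun K v\<bar> \<le> R * norm (u - v)"
proof -
  obtain R where R: "\<And>x. x \<in> K \<Longrightarrow> norm x \<le> R"
    using compact_imp_bounded[OF assms(1)] bounded_iff by blast
  have R0: "R \<ge> 0" using assms(2) R norm_ge_zero order_trans by blast
  have one: "support_fun K u \<le> support_fun K v + R * norm (u - v)" for u v
  proof -
    obtain x where x: "x \<in> K" "support_fun K u = x \<bullet> u" using sf_att[OF assms] by blast
    have "x \<bullet> u = x \<bullet> v + x \<bullet> (u - v)" by (simp add: inner_diff_right)
    also have "x \<bullet> (u - v) \<le> norm x * norm (u - v)" using norm_cauchy_schwarz by blast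
    also have "\<dots> \<le> R * norm (u - v)" using R[OF x(1)] by (simp add: mult_right_mono)
    finally show ?thesis using x sf_ge[OF assms x(1), of v] by linarith
  qed
  show ?thesis
    apply (rule that[OF R0])
    using one by (smt (verit) norm_minus_commute)
qed

lemma sf_cont:
  fixes K :: "'a::euclidean_space set"
  assumes "compact K" "K \<noteq> {}"
  shows "continuous_on A (support_fun K)"
proof -
  obtain R where R: "R \<ge> 0" "\<And>u v. \<bar>support_fun K u - support_fun K v\<bar> \<le> R * norm (u - v)"
    using sf_lip[OF assms] by blast
  have "R-lipschitz_on A (support_fun K)"
    by (rule lipschitz_onI) (use R in \<open>auto simp: dist_norm dist_real_def\<close>)
  then show ?thesis by (rule lipschitz_on_continuous_on)
qed

lemma sf_nonneg:
  assumes "compact K" "0 \<in> K" shows "support_fun K u \<ge> 0"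
  using sf_ge[OF assms(1) _ assms(2)] assms(2) by auto

lemma sf_scale:
  fixes K :: "'a::euclidean_space set"
  assumes "compact K" "K \<noteq> {}" "t > 0"
  shows "support_fun ((\<lambda>x. t *\<^sub>R x) ` K) u = t * support_fun K u"
proof -
  have c: "compact ((\<lambda>x. t *\<^sub>R x) ` K)" using assms(1) by (rule compact_scaling)
  have ne: "(\<lambda>x. t *\<^sub>R x) ` K \<noteq> {}" using assms(2) by blast
  obtain y where y: "y \<in> (\<lambda>x. t *\<^sub>R x) ` K" "support_fun ((\<lambda>x. t *\<^sub>R x) ` K) u = y \<bullet> u"
    using sf_att[OF c ne] by blast
  then obtain z where z: "z \<in> K" "y = t *\<^sub>R z" by blast
  obtain x where x: "x \<in> K" "support_fun K u = x \<bullet> u" using sf_att[OF assms(1,2)] by blast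
  have 1: "y \<bullet> u \<le> t * support_fun K u"
    using sf_ge[OF assms(1,2) z(1), of u] assms(3) z(2) by (simp add: mult_left_mono)
  have 2: "t * support_fun K u \<le> support_fun ((\<lambda>x. t *\<^sub>R x) ` K) u"
    using sf_ge[OF c ne, of "t *\<^sub>R x" u] x by auto
  show ?thesis using 1 2 y by linarith
qed

lemma sf_ball: "u \<in> sphere 0 1 \<Longrightarrow> support_fun (cball (0::'a::euclidean_space) 1) u = 1"
proof -
  assume u: "u \<in> sphere 0 1"
  have "\<forall>x\<in>cball 0 1. x \<bullet> u \<le> 1"
    using u by (metis mem_cball_0 mem_sphere_0 mult.right_neutral norm_cauchy_schwarz order_trans mult_left_le_one_le norm_ge_zero)
  moreover have "u \<bullet> u = 1" using u by (simp add: dot_square_norm)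
  ultimately show ?thesis unfolding support_fun_def using u
    by (intro cSup_eq_maximum) (auto intro!: image_eqI[of _ _ u])
qed

lemma strict_conv:
  fixes a b x :: "'a::euclidean_space"
  assumes "norm a \<le> 1" "norm b \<le> 1" "x \<in> open_segment a b"
  shows "norm x < 1"
proof -
  obtain u where u: "a \<noteq> b" "0 < u" "u < 1" "x = (1 - u) *\<^sub>R a + u *\<^sub>R b"
    using assms(3) by (auto simp: in_segment)
  have id: "norm x ^ 2 = (1 - u) * norm a ^ 2 + u * norm b ^ 2 - u * (1 - u) * norm (a - b) ^ 2"
    unfolding u(4) power2_norm_eq_inner
    by (simp add: inner_add_left inner_add_right inner_diff_left inner_diff_right inner_commute algebra_simps)
  have "norm (a - b) > 0" using u(1) by simp
  then have "u * (1 - u) * norm (a - b) ^ 2 > 0" using u by simp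
  moreover have "(1 - u) * norm a ^ 2 \<le> (1 - u)" using assms(1) u
    by (simp add: mult_left_le power_le_one)
  moreover have "u * norm b ^ 2 \<le> u" using assms(2) u
    by (simp add: mult_left_le power_le_one)
  ultimately have "norm x ^ 2 < 1" using id by linarith
  then show ?thesis by (simp add: power_less_one_iff norm_ge_zero) 
qed

lemma os_facts:
  assumes "orth_subgroup S" "\<phi> \<in> S"
  shows "orthogonal_transformation \<phi>" "linear \<phi>" "inv \<phi> \<in> S" "\<And>x. \<phi> (inv \<phi> x) = x"
    "\<And>x. inv \<phi> (\<phi> x) = x" "\<And>x. norm (\<phi> x) = norm x" "\<And>x y. \<phi> x \<bullet> \<phi> y = x \<bullet> y"
proof -
  have ot: "orthogonal_transformation \<phi>" using assms unfolding orth_subgroup_def by blast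
  show "orthogonal_transformation \<phi>" by (rule ot)
  show "linear \<phi>" by (rule orthogonal_transformation_linear[OF ot])
  show "inv \<phi> \<in> S" using assms unfolding orth_subgroup_def by blast
  show "\<And>x. \<phi> (inv \<phi> x) = x" by (rule surj_f_inv_f[OF orthogonal_transformation_surj[OF ot]])
  show "\<And>x. inv \<phi> (\<phi> x) = x" by (rule inv_f_f[OF orthogonal_transformation_inj[OF ot]])
  show "\<And>x. norm (\<phi> x) = norm x" by (rule orthogonal_transformation_norm[OF ot])
  show "\<And>x y. \<phi> x \<bullet> \<phi> y = x \<bullet> y" using ot unfolding orthogonal_transformation_def by blast
qed

lemma orbit_finite:
  fixes S :: "('a::euclidean_space \<Rightarrow> 'a) set"
  assumes os: "orth_subgroup S" and span: "spanning_property S" and a: "a \<in> sphere 0 1"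
  shows "finite ((\<lambda>\<phi>. \<phi> a) ` S)"
proof -
  let ?O = "(\<lambda>\<phi>. \<phi> a) ` S"
  obtain T where T: "finite T" "convex hull ?O = convex hull T"
  proof -
    have "polytope (convex hull ?O)" using bspec[OF span[unfolded spanning_property_def] a] by (rule conjunct1)
    then obtain v where "finite v" "convex hull ?O = convex hull v" unfolding polytope_def by blast
    then show ?thesis by (rule that)
  qed
  have Oc: "?O \<subseteq> cball 0 1"
  proof
    fix w assume "w \<in> ?O"
    then obtain \<psi> where "\<psi> \<in> S" "w = \<psi> a" by blast
    then show "w \<in> cball 0 1" using a os_facts(6)[OF os \<open>\<psi> \<in> S\<close>, of a] by simp
  qed
  then have hc: "convex hull ?O \<subseteq> cball 0 1" by (rule hull_minimal) (rule convex_cball)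
  have "w \<in> T" if w: "w \<in> ?O" for w
  proof -
    obtain \<psi> where "\<psi> \<in> S" "w = \<psi> a" using w by blast
    then have no: "norm w = 1" using a os_facts(6)[OF os \<open>\<psi> \<in> S\<close>, of a] by simp
    have "w extreme_point_of (convex hull ?O)"
      unfolding extreme_point_of_def
    proof (intro conjI ballI)
      show "w \<in> convex hull ?O" using w hull_subset[of ?O convex] by (rule rev_subsetD)
      fix x y assume xy: "x \<in> convex hull ?O" "y \<in> convex hull ?O"
      have "x \<in> cball 0 1" by (rule subsetD[OF hc xy(1)])
      moreover have "y \<in> cball 0 1" by (rule subsetD[OF hc xy(2)])
      ultimately have "norm x \<le> 1" "norm y \<le> 1" by simp_all
      then show "w \<notin> open_segment x y" using strict_conv[of x y w] no by linarith
    qed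
    then have "w extreme_point_of (convex hull T)" using T(2) by simp
    then show ?thesis by (rule extreme_point_of_convex_hull)
  qed
  then have "?O \<subseteq> T" by (rule subsetI)
  then show ?thesis using T(1) by (rule finite_subset)
qed

lemma K0_pos:
  fixes S :: "('a::euclidean_space \<Rightarrow> 'a) set"
  assumes os: "orth_subgroup S" and span: "spanning_property S"
    and K: "K \<in> K0 S" and a: "a \<in> sphere 0 1"
  shows "support_fun K a > 0"
proof (rule ccontr)
  assume "\<not> support_fun K a > 0"
  then have ha: "support_fun K a \<le> 0" by simp
  have Kc: "compact K" "0 \<in> K" "interior K \<noteq> {}" and Kinv: "\<And>\<phi>. \<phi> \<in> S \<Longrightarrow> \<phi> ` K = K"
    using K unfolding K0_def convex_body_def by auto
  have Kne: "K \<noteq> {}" using Kc by auto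
  let ?O = "(\<lambda>\<phi>. \<phi> a) ` S"
  have fin: "finite ?O" by (rule orbit_finite[OF os span a])
  have neg: "w \<bullet> y \<le> 0" if wy: "w \<in> ?O" "y \<in> K" for w y
  proof -
    obtain \<psi> where \<psi>: "\<psi> \<in> S" "w = \<psi> a" using wy by blast
    have "inv \<psi> y \<in> K" using Kinv[OF os_facts(3)[OF os \<psi>(1)]] wy(2) by blast
    then have "inv \<psi> y \<bullet> a \<le> 0" using sf_ge[OF Kc(1) Kne, of "inv \<psi> y" a] ha by linarith
    moreover have "w \<bullet> y = a \<bullet> inv \<psi> y"
      using os_facts(4,7)[OF os \<psi>(1)] \<psi>(2) by metis
    ultimately show ?thesis by (simp add: inner_commute)
  qed
  define s where "s = sum id ?O"
  have fix_s: "\<phi> s = s" if \<phi>: "\<phi> \<in> S" for \<phi>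
  proof -
    have img: "\<phi> ` ?O = ?O"
    proof
      show "\<phi> ` ?O \<subseteq> ?O"
      proof
        fix w assume "w \<in> \<phi> ` ?O"
        then obtain \<psi> where \<psi>: "\<psi> \<in> S" "w = \<phi> (\<psi> a)" by blast
        moreover have "\<phi> \<circ> \<psi> \<in> S" using os \<phi> \<psi>(1) unfolding orth_subgroup_def by blast
        ultimately show "w \<in> ?O" by (metis comp_apply image_eqI)
      qed
      show "?O \<subseteq> \<phi> ` ?O"
      proof
        fix w assume "w \<in> ?O"
        then obtain \<psi> where \<psi>: "\<psi> \<in> S" "w = \<psi> a" by blast
        have "inv \<phi> \<circ> \<psi> \<in> S" using os \<phi> \<psi>(1) os_facts(3)[OF os \<phi>] unfolding orth_subgroup_def by blast
        moreover have "w = \<phi> ((inv \<phi> \<circ> \<psi>) a)" using os_facts(4)[OF os \<phi>] \<psi> by simp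
        ultimately show "w \<in> \<phi> ` ?O" by blast
      qed
    qed
    have "\<phi> s = sum \<phi> ?O" unfolding s_def using os_facts(2)[OF os \<phi>] by (simp add: linear_sum)
    also have "\<dots> = sum id (\<phi> ` ?O)"
      using sum.reindex[of \<phi> ?O id] inj_on_subset[OF orthogonal_transformation_inj[OF os_facts(1)[OF os \<phi>]]]
      by simp
    also have "\<dots> = s" using img s_def by simp
    finally show ?thesis .
  qed
  have s0: "s = 0"
  proof (rule ccontr)
    assume sn: "s \<noteq> 0"
    define b where "b = s /\<^sub>R norm s"
    have b: "b \<in> sphere 0 1" using sn by (simp add: b_def)
    have fb: "\<phi> b = b" if "\<phi> \<in> S" for \<phi>
      using fix_s[OF that] os_facts(2)[OF os that] by (simp add: b_def linear_scale)
    have idS: "id \<in> S" using os unfolding orth_subgroup_def by blast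
    have "(\<lambda>\<phi>. \<phi> b) ` S = {b}"
    proof
      show "(\<lambda>\<phi>. \<phi> b) ` S \<subseteq> {b}" using fb by auto
      show "{b} \<subseteq> (\<lambda>\<phi>. \<phi> b) ` S" using idS by (metis empty_subsetI id_apply image_eqI insert_subset)
    qed
    then have "aff_dim (convex hull ((\<lambda>\<phi>. \<phi> b) ` S)) = 0" by simp
    moreover have "aff_dim (convex hull ((\<lambda>\<phi>. \<phi> b) ` S)) = int DIM('a)"
      using bspec[OF span[unfolded spanning_property_def] b] by (rule conjunct2)
    ultimately show False by simp
  qed
  have zero: "w \<bullet> y = 0" if wy: "w \<in> ?O" "y \<in> K" for w y
  proof -
    have "(\<Sum>w\<in>?O. w \<bullet> y) = s \<bullet> y" unfolding s_def by (simp add: inner_sum_left)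
    then have sm: "(\<Sum>w\<in>?O. - (w \<bullet> y)) = 0" using s0 by (simp add: sum_negf)
    have "\<forall>w\<in>?O. - (w \<bullet> y) = 0"
    proof -
      have "\<forall>x\<in>?O. 0 \<le> - (x \<bullet> y)" using neg[OF _ wy(2)] by simp
      then show ?thesis using sum_nonneg_eq_0_iff[OF fin, of "\<lambda>w. - (w \<bullet> y)"] sm by blast
    qed
    then have "- (w \<bullet> y) = 0" using wy(1) by blast
    then show ?thesis by simp
  qed
  have "K \<subseteq> {0}"
  proof
    fix y assume y: "y \<in> K"
    have "affine {x. x \<bullet> y = 0}"
      by (rule subspace_imp_affine) (auto simp: subspace_def inner_add_left)
    moreover have "?O \<subseteq> {x. x \<bullet> y = 0}" using zero y by blast
    ultimately have "affine hull ?O \<subseteq> {x. x \<bullet> y = 0}" by (simp add: hull_minimal)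
    moreover have "aff_dim ?O = int DIM('a)"
      using bspec[OF span[unfolded spanning_property_def] a] by (simp add: aff_dim_convex_hull)
    then have "affine hull ?O = UNIV" using aff_dim_eq_full by blast
    ultimately have "y \<bullet> y = 0" by blast
    then show "y \<in> {0}" by simp
  qed
  then have "interior K = {}" using interior_mono interior_singleton by blast
  then show False using Kc by simp
qed

definition A0 :: "'a::euclidean_space set" where "A0 = ball 0 1 - {0}"

definition J :: "('a::euclidean_space \<Rightarrow> real) \<Rightarrow> real" where
  "J g = (LINT x : A0 | lborel. g (x /\<^sub>R norm x))"

lemma A0_sets [measurable]: "(A0::'a::euclidean_space set) \<in> sets lborel"
  unfolding A0_def by simp

lemma A0_borel [simp, measurable]: "(A0::'a::euclidean_space set) \<in> sets borel"
  unfolding A0_def by simp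

lemma A0_fin: "emeasure lborel (A0::'a::euclidean_space set) < \<infinity>"
proof -
  have "emeasure lborel (A0::'a set) \<le> emeasure lborel (ball (0::'a) 1)"
    unfolding A0_def by (intro emeasure_mono) auto
  then show ?thesis using emeasure_lborel_ball_finite le_less_trans by blast
qed

lemma int_change0:
  fixes F H :: "'a::euclidean_space \<Rightarrow> real"
  assumes "\<And>x. x \<noteq> 0 \<Longrightarrow> F x = H x"
  shows "integral\<^sup>L lborel F = integral\<^sup>L lborel H"
proof -
  define d where "d x = indicator {0::'a} x * (H 0 - F 0)" for x
  have di: "integrable lborel d" unfolding d_def
    by (intro integrable_mult_left integrable_real_indicator) auto
  have d0: "integral\<^sup>L lborel d = 0" unfolding d_def by simp
  have Hd: "H = (\<lambda>x. F x + d x)"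
  proof (rule ext)
    fix x show "H x = F x + d x" by (cases "x = 0") (simp_all add: d_def assms)
  qed
  have Fd: "F = (\<lambda>x. H x - d x)"
  proof (rule ext)
    fix x show "F x = H x - d x" by (cases "x = 0") (simp_all add: d_def assms)
  qed
  show ?thesis
  proof (cases "integrable lborel F")
    case True
    then show ?thesis using di d0 Hd by simp
  next
    case False
    then have "\<not> integrable lborel H" using di Fd by (metis Bochner_Integration.integrable_diff)
    then show ?thesis using False by (simp add: not_integrable_integral_eq)
  qed
qed

lemma sphere_int_J: "sphere_int g = real DIM('a) * J (g :: 'a::euclidean_space \<Rightarrow> real)"
proof -
  have "(LINT x : ball 0 1 | lborel. g (x /\<^sub>R norm x)) = (LINT x : A0 | lborel. g (x /\<^sub>R norm x))"
    unfolding set_lebesgue_integral_def by (rule int_change0) (auto simp: A0_def indicator_def)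
  then show ?thesis unfolding sphere_int_def J_def by simp
qed

lemma meas_comp:
  fixes g :: "'a::euclidean_space \<Rightarrow> real"
  assumes "g \<in> borel_measurable (restrict_space borel (sphere 0 1))"
  shows "set_borel_measurable lborel A0 (\<lambda>x. g (x /\<^sub>R norm x))"
proof -
  have c: "continuous_on A0 (\<lambda>x::'a. x /\<^sub>R norm x)"
    unfolding A0_def by (intro continuous_intros) auto
  have "(\<lambda>x::'a. x /\<^sub>R norm x) \<in> measurable (restrict_space borel A0) borel"
    by (rule borel_measurable_continuous_on_restrict[OF c])
  moreover have eq: "sets (restrict_space lborel (A0::'a set)) = sets (restrict_space borel A0)"
    by (rule sets_restrict_space_cong) simp
  ultimately have m1: "(\<lambda>x::'a. x /\<^sub>R norm x) \<in> measurable (restrict_space lborel A0) borel"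
    by (simp add: measurable_cong_sets[OF eq refl])
  have nrm: "(\<lambda>x::'a. x /\<^sub>R norm x) \<in> measurable (restrict_space lborel A0) (restrict_space borel (sphere 0 1))"
    by (rule measurable_restrict_space2[OF _ m1]) (auto simp: A0_def space_restrict_space)
  have "(\<lambda>x. g (x /\<^sub>R norm x)) \<in> borel_measurable (restrict_space lborel A0)"
    using measurable_compose[OF nrm assms] by (simp add: comp_def)
  then show ?thesis unfolding set_borel_measurable_def
    by (subst borel_measurable_restrict_space_iff[symmetric]) auto
qed

lemma J_int:
  fixes g :: "'a::euclidean_space \<Rightarrow> real"
  assumes "g \<in> borel_measurable (restrict_space borel (sphere 0 1))"
    and "\<And>u. u \<in> sphere 0 1 \<Longrightarrow> \<bar>g u\<bar> \<le> B"
  shows "set_integrable lborel A0 (\<lambda>x. g (x /\<^sub>R norm x))"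
proof (rule set_integrable_bound[OF _ meas_comp[OF assms(1)]])
  show "set_integrable lborel A0 (\<lambda>x::'a. B)"
    unfolding set_integrable_def
  proof (rule integrable_scaleR_left)
    show "integrable lborel (indicat_real (A0::'a set))" using A0_fin A0_sets by (intro integrable_real_indicator) auto
  qed
  show "AE x in lborel. x \<in> A0 \<longrightarrow> norm (g (x /\<^sub>R norm x)) \<le> norm B"
  proof (intro AE_I2 impI)
    fix x :: 'a assume "x \<in> A0"
    then have "x /\<^sub>R norm x \<in> sphere 0 1" by (simp add: A0_def)
    then have "\<bar>g (x /\<^sub>R norm x)\<bar> \<le> B" by (rule assms(2))
    then show "norm (g (x /\<^sub>R norm x)) \<le> norm B" by (simp only: real_norm_def)
  qed
qed

lemma J_mono:
  fixes g1 g2 :: "'a::euclidean_space \<Rightarrow> real"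
  assumes "set_integrable lborel A0 (\<lambda>x. g1 (x /\<^sub>R norm x))"
    "set_integrable lborel A0 (\<lambda>x. g2 (x /\<^sub>R norm x))"
    "\<And>u. u \<in> sphere 0 1 \<Longrightarrow> g1 u \<le> g2 u"
  shows "J g1 \<le> J g2"
  unfolding J_def using assms by (intro set_integral_mono) (auto simp: A0_def)

lemma J_const: "J (\<lambda>u::'a::euclidean_space. c) = c * measure lborel (A0::'a set)"
proof -
  have "emeasure lborel (A0::'a set) \<noteq> \<infinity>" using A0_fin by (simp add: less_top)
  then show ?thesis unfolding J_def by (subst set_integral_const[OF A0_sets]) auto
qed

lemma open_pos:
  fixes U :: "'a::euclidean_space set"
  assumes "open U" "U \<noteq> {}" "bounded U"
  shows "measure lborel U > 0"
proof -
  have "U \<in> lmeasurable" using assms by (simp add: lmeasurable_open)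
  moreover have "\<not> negligible U" using open_not_negligible assms by blast
  ultimately have "measure lebesgue U \<noteq> 0" using negligible_iff_measure0 by blast
  moreover have "measure lebesgue U = measure lborel U"
    using assms(1) by (simp add: measure_completion)
  ultimately show ?thesis by (metis measure_nonneg order_le_less)
qed

lemma A0_pos: "measure lborel (A0::'a::euclidean_space set) > 0"
proof -
  obtain e :: 'a where "e \<in> Basis" using nonempty_Basis by blast
  then have "norm ((1/2) *\<^sub>R e) = 1/2" by simp
  have "ball ((1/2) *\<^sub>R e) (1/2) \<subseteq> (A0::'a set)"
  proof
    fix x assume "x \<in> ball ((1/2) *\<^sub>R e) (1/2)"
    then have d: "norm ((1/2) *\<^sub>R e - x) < 1/2" by (simp add: dist_norm)
    have "norm x \<le> norm ((1/2) *\<^sub>R e) + norm ((1/2) *\<^sub>R e - x)"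
      using norm_triangle_ineq4[of "(1/2) *\<^sub>R e" "(1/2) *\<^sub>R e - x"] by simp
    then have "norm x < 1" using d \<open>norm ((1/2) *\<^sub>R e) = 1/2\<close> by linarith
    moreover have "x \<noteq> 0" using d \<open>norm ((1/2) *\<^sub>R e) = 1/2\<close> by auto
    ultimately show "x \<in> A0" by (simp add: A0_def)
  qed
  then have "measure lborel (ball ((1/2) *\<^sub>R e) (1/2)) \<le> measure lborel (A0::'a set)"
    using A0_fin by (intro measure_mono_fmeasurable) (auto simp: fmeasurable_def)
  moreover have "measure lborel (ball ((1/2) *\<^sub>R e) (1/2::real)) > 0"
    by (rule open_pos) auto
  ultimately show ?thesis by linarith
qed

lemma sphere_ne: "sphere (0::'a::euclidean_space) 1 \<noteq> {}"
proof -
  obtain e :: 'a where "e \<in> Basis" using nonempty_Basis by blast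
  then have "e \<in> sphere 0 1" by simp
  then show ?thesis by blast
qed

definition hmin :: "'a::euclidean_space set \<Rightarrow> real" where
  "hmin K = Inf (support_fun K ` sphere 0 1)"

lemma hmin_props:
  fixes K :: "'a::euclidean_space set"
  assumes "compact K" "K \<noteq> {}"
  shows "\<exists>u0\<in>sphere 0 1. support_fun K u0 = hmin K"
    and "\<And>u. u \<in> sphere 0 1 \<Longrightarrow> hmin K \<le> support_fun K u"
proof -
  obtain u0 where u0: "u0 \<in> sphere 0 1" "\<And>u. u \<in> sphere 0 1 \<Longrightarrow> support_fun K u0 \<le> support_fun K u"
    using continuous_attains_inf[OF compact_sphere sphere_ne sf_cont[OF assms]] by blast
  have e: "hmin K = support_fun K u0"
    unfolding hmin_def using u0 by (intro cInf_eq_minimum) auto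
  show "\<exists>u0\<in>sphere 0 1. support_fun K u0 = hmin K" using e u0(1) by auto
  show "\<And>u. u \<in> sphere 0 1 \<Longrightarrow> hmin K \<le> support_fun K u" using e u0(2) by simp
qed

lemma hmax:
  fixes K :: "'a::euclidean_space set"
  assumes "compact K" "K \<noteq> {}"
  obtains M where "\<And>u. u \<in> sphere 0 1 \<Longrightarrow> support_fun K u \<le> M"
proof -
  obtain u1 where u1: "u1 \<in> sphere 0 1" "\<And>u. u \<in> sphere 0 1 \<Longrightarrow> support_fun K u \<le> support_fun K u1"
    using continuous_attains_sup[OF compact_sphere sphere_ne sf_cont[OF assms]] by blast
  show ?thesis by (rule that, rule u1(2))
qed

lemma K0_facts:
  assumes "K \<in> K0 S"
  shows "compact K" "K \<noteq> {}" "0 \<in> K" "convex K" "interior K \<noteq> {}" "\<And>\<phi>. \<phi> \<in> S \<Longrightarrow> \<phi> ` K = K"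
  using assms unfolding K0_def convex_body_def by auto

lemma hmin_pos:
  fixes S :: "('a::euclidean_space \<Rightarrow> 'a) set"
  assumes "orth_subgroup S" "spanning_property S" "K \<in> K0 S"
  shows "hmin K > 0"
proof -
  obtain u0 where "u0 \<in> sphere 0 1" "support_fun K u0 = hmin K"
    using hmin_props(1)[OF K0_facts(1,2)[OF assms(3)]] by blast
  then show ?thesis using K0_pos[OF assms] by metis
qed

lemma Fminf_eq: "Fminf K = Vol K / hmin K ^ DIM('a)" for K :: "'a::euclidean_space set"
  unfolding Fminf_def hmin_def by simp

lemma Vol_nonneg: "Vol K \<ge> 0" unfolding Vol_def by simp

lemma A0_open: "open (A0::'a::euclidean_space set)"
  unfolding A0_def by (simp add: open_Diff)

locale fdat =
  fixes f :: "'a::euclidean_space \<Rightarrow> real" and c1 c2 :: real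
  assumes meas: "f \<in> borel_measurable (restrict_space borel (sphere 0 1))"
    and c1: "c1 > 0" and bnd: "\<And>u. u \<in> sphere 0 1 \<Longrightarrow> c1 \<le> f u \<and> f u \<le> c2"
begin

lemma c2pos: "c2 > 0"
proof -
  obtain u :: 'a where "u \<in> sphere 0 1" using sphere_ne by blast
  then show ?thesis using bnd[of u] c1 by linarith
qed

lemma f_int: "set_integrable lborel A0 (\<lambda>x. f (x /\<^sub>R norm x))"
proof (rule J_int[OF meas, of c2])
  fix u :: 'a assume "u \<in> sphere 0 1"
  then have "c1 \<le> f u" "f u \<le> c2" using bnd by auto
  then have "f u > 0" using c1 by linarith
  then have "\<bar>f u\<bar> = f u" by simp
  then show "\<bar>f u\<bar> \<le> c2" using \<open>f u \<le> c2\<close> by linarith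
qed

lemma const_int: "set_integrable lborel A0 (\<lambda>x::'a. c::real)"
  using J_int[of "\<lambda>_. c" "\<bar>c\<bar>"] by simp

lemma cf_int: "set_integrable lborel A0 (\<lambda>x. c * f (x /\<^sub>R norm x))"
  unfolding set_integrable_def
  using integrable_mult_right[OF f_int[unfolded set_integrable_def], of c]
  by (simp add: algebra_simps)

lemma Jf_bounds: "c1 * measure lborel (A0::'a set) \<le> J f" "J f \<le> c2 * measure lborel (A0::'a set)"
proof -
  show "c1 * measure lborel (A0::'a set) \<le> J f"
    unfolding J_const[symmetric] by (rule J_mono[OF const_int f_int]) (use bnd in auto)
  show "J f \<le> c2 * measure lborel (A0::'a set)"
    unfolding J_const[symmetric] by (rule J_mono[OF f_int const_int]) (use bnd in auto)
qed

lemma Jf_pos: "J f > 0"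
proof -
  have "c1 * measure lborel (A0::'a set) > 0" using c1 A0_pos[where 'a='a] by simp
  then show ?thesis using Jf_bounds(1) by linarith
qed

lemma gp_meas:
  assumes "compact K" "K \<noteq> {}"
  shows "(\<lambda>u. f u * support_fun K u powr p) \<in> borel_measurable (restrict_space borel (sphere (0::'a) 1))"
proof -
  have hm: "support_fun K \<in> borel_measurable (restrict_space borel (sphere (0::'a) 1))"
    by (rule borel_measurable_continuous_on_restrict[OF sf_cont[OF assms]])
  have "(\<lambda>u. support_fun K u powr p) \<in> borel_measurable (restrict_space borel (sphere (0::'a) 1))"
    by (rule powr_real_measurable[OF hm]) simp
  then show ?thesis by (rule borel_measurable_times[OF meas])
qed

lemma gp_int:
  assumes "compact K" "K \<noteq> {}" "hmin K > 0" "p \<le> 0"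
  shows "set_integrable lborel A0 (\<lambda>x. f (x /\<^sub>R norm x) * support_fun K (x /\<^sub>R norm x) powr p)"
proof (rule J_int[OF gp_meas[OF assms(1,2)], where B = "c2 * hmin K powr p"])
  fix u :: 'a assume u: "u \<in> sphere 0 1"
  then have f: "c1 \<le> f u" "f u \<le> c2" using bnd by auto
  have h: "hmin K \<le> support_fun K u" using hmin_props(2)[OF assms(1,2) u] .
  have hp: "support_fun K u powr p \<le> hmin K powr p" by (rule powr_mono2'[OF assms(4,3) h])
  have "\<bar>f u * support_fun K u powr p\<bar> = f u * support_fun K u powr p"
    using f c1 by (simp add: abs_mult)
  also have "\<dots> \<le> c2 * hmin K powr p" using f c1 hp by (intro mult_mono) auto
  finally show "\<bar>f u * support_fun K u powr p\<bar> \<le> c2 * hmin K powr p" .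
qed

lemma Jgp_upper:
  assumes "compact K" "K \<noteq> {}" "hmin K > 0" "p \<le> 0"
  shows "J (\<lambda>u. f u * support_fun K u powr p) \<le> hmin K powr p * J f"
proof -
  have "J (\<lambda>u. f u * support_fun K u powr p) \<le> J (\<lambda>u. hmin K powr p * f u)"
  proof (rule J_mono[OF gp_int[OF assms] cf_int])
    fix u :: 'a assume u: "u \<in> sphere 0 1"
    then have f: "c1 \<le> f u" using bnd by auto
    have h: "hmin K \<le> support_fun K u" using hmin_props(2)[OF assms(1,2) u] .
    have hp: "support_fun K u powr p \<le> hmin K powr p" by (rule powr_mono2'[OF assms(4,3) h])
    show "f u * support_fun K u powr p \<le> hmin K powr p * f u"
      using mult_left_mono[OF hp, of "f u"] f c1 by (simp add: mult.commute)
  qed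
  also have "\<dots> = hmin K powr p * J f" unfolding J_def by simp
  finally show ?thesis .
qed

lemma Jgp_pos:
  assumes "compact K" "K \<noteq> {}" "hmin K > 0" "p \<le> 0"
  shows "J (\<lambda>u. f u * support_fun K u powr p) > 0"
proof -
  obtain M where M: "\<And>u. u \<in> sphere 0 1 \<Longrightarrow> support_fun K u \<le> M" using hmax[OF assms(1,2)] by blast
  obtain u0 :: 'a where u0: "u0 \<in> sphere 0 1" using sphere_ne by blast
  have Mpos: "M > 0" using M[OF u0] hmin_props(2)[OF assms(1,2) u0] assms(3) by linarith
  have "J (\<lambda>u::'a. c1 * M powr p) \<le> J (\<lambda>u. f u * support_fun K u powr p)"
  proof (rule J_mono)
    show "set_integrable lborel A0 (\<lambda>x::'a. c1 * M powr p)" by (rule const_int)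
    show "set_integrable lborel A0 (\<lambda>x. f (x /\<^sub>R norm x) * support_fun K (x /\<^sub>R norm x) powr p)"
      by (rule gp_int[OF assms])
    fix u :: 'a assume u: "u \<in> sphere 0 1"
    then have f: "c1 \<le> f u" using bnd by auto
    have h: "hmin K \<le> support_fun K u" using hmin_props(2)[OF assms(1,2) u] .
    have hp: "M powr p \<le> support_fun K u powr p"
      by (rule powr_mono2'[OF assms(4)]) (use h assms(3) M[OF u] in auto)
    show "c1 * M powr p \<le> f u * support_fun K u powr p"
      using f c1 hp by (intro mult_mono) auto
  qed
  moreover have "J (\<lambda>u::'a. c1 * M powr p) > 0"
    unfolding J_const using c1 Mpos A0_pos[where 'a='a] by simp
  ultimately show ?thesis by linarith
qed

lemma Jgp_lower:
  assumes "compact K" "K \<noteq> {}" "hmin K > 0" "e > 0"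
  obtains \<nu> where "\<nu> > 0" "\<And>p. p < 0 \<Longrightarrow> c1 * (hmin K + e) powr p * \<nu> \<le> J (\<lambda>u. f u * support_fun K u powr p)"
proof -
  define G where "G x = support_fun K (x /\<^sub>R norm x)" for x :: 'a
  define U where "U = A0 \<inter> G -` {..< hmin K + e}"
  have cG: "continuous_on A0 G" unfolding G_def
    by (rule continuous_on_compose2[OF sf_cont[OF assms(1,2), of UNIV]]) (auto simp: A0_def intro!: continuous_intros)
  have oU: "open U" unfolding U_def by (rule continuous_open_preimage[OF cG A0_open open_lessThan])
  obtain u0 where u0: "u0 \<in> sphere (0::'a) 1" "support_fun K u0 = hmin K"
    using hmin_props(1)[OF assms(1,2)] by blast
  have "(1/2) *\<^sub>R u0 \<in> U"
  proof -
    have "norm ((1/2) *\<^sub>R u0) = 1/2" using u0(1) by simp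
    then have "(1/2) *\<^sub>R u0 \<in> A0" unfolding A0_def by auto
    moreover have "G ((1/2) *\<^sub>R u0) = hmin K" using u0 unfolding G_def by simp
    ultimately show ?thesis unfolding U_def using assms(4) by simp
  qed
  then have neU: "U \<noteq> {}" by blast
  have UA: "U \<subseteq> A0" unfolding U_def by blast
  have bU: "bounded U" using UA unfolding A0_def by (meson Diff_subset bounded_ball bounded_subset order_trans)
  have sU: "U \<in> sets lborel" using oU by simp
  have fU: "emeasure lborel U < \<infinity>"
    using emeasure_mono[OF UA A0_sets] A0_fin[where 'a='a] by (meson le_less_trans)
  define \<nu> where "\<nu> = measure lborel U"
  have nu: "\<nu> > 0" unfolding \<nu>_def by (rule open_pos[OF oU neU bU])
  show ?thesis
  proof (rule that[OF nu])
    fix p :: real assume p: "p < 0"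
    define c where "c = c1 * (hmin K + e) powr p"
    have iU: "integrable lborel (indicat_real U)" using sU fU by (rule integrable_real_indicator)
    have eqf: "(\<lambda>x. indicat_real A0 x *\<^sub>R (c * indicat_real U x)) = (\<lambda>x. c * indicat_real U x)"
    proof (rule ext)
      fix x show "indicat_real A0 x *\<^sub>R (c * indicat_real U x) = c * indicat_real U x"
        using UA by (cases "x \<in> U") (auto simp: indicator_def)
    qed
    have int1: "set_integrable lborel A0 (\<lambda>x. c * indicat_real U x)"
      unfolding set_integrable_def eqf using iU by (rule integrable_mult_right)
    have "(LINT x:A0|lborel. c * indicat_real U x) \<le> (LINT x:A0|lborel. f (x /\<^sub>R norm x) * support_fun K (x /\<^sub>R norm x) powr p)"
    proof (rule set_integral_mono[OF int1 gp_int[OF assms(1,2,3)]])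
      show "p \<le> 0" using p by simp
      fix x :: 'a assume x: "x \<in> A0"
      then have xs: "x /\<^sub>R norm x \<in> sphere 0 1" by (simp add: A0_def)
      then have f: "c1 \<le> f (x /\<^sub>R norm x)" using bnd by auto
      have h: "hmin K \<le> G x" using hmin_props(2)[OF assms(1,2) xs] unfolding G_def .
      have nn: "0 \<le> f (x /\<^sub>R norm x) * support_fun K (x /\<^sub>R norm x) powr p" using f c1 by simp
      show "c * indicat_real U x \<le> f (x /\<^sub>R norm x) * support_fun K (x /\<^sub>R norm x) powr p"
      proof (cases "x \<in> U")
        case True
        then have "G x < hmin K + e" unfolding U_def by simp
        then have "(hmin K + e) powr p < G x powr p"
          using powr_less_mono2_neg[OF p, of "G x" "hmin K + e"] h assms(3) by linarith
        then have "c \<le> f (x /\<^sub>R norm x) * G x powr p"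
          unfolding c_def using f c1 by (intro mult_mono) auto
        then show ?thesis using True unfolding G_def by simp
      next
        case False
        then show ?thesis using nn by simp
      qed
    qed
    moreover have "(LINT x:A0|lborel. c * indicat_real U x) = c * \<nu>"
    proof -
      have "(LINT x:A0|lborel. c * indicat_real U x) = c * (LINT x:A0|lborel. indicat_real U x)" by simp
      also have "(LINT x:A0|lborel. indicat_real U x) = \<nu>"
      proof -
        have "(\<lambda>x. indicat_real A0 x *\<^sub>R indicat_real U x) = indicat_real U"
        proof (rule ext)
          fix x show "indicat_real A0 x *\<^sub>R indicat_real U x = indicat_real U x"
            using UA by (cases "x \<in> U") (auto simp: indicator_def)
        qed
        then show ?thesis unfolding set_lebesgue_integral_def \<nu>_def by simp
      qed
      finally show ?thesis .
    qed
    ultimately have "c * \<nu> \<le> (LINT x:A0|lborel. f (x /\<^sub>R norm x) * support_fun K (x /\<^sub>R norm x) powr p)"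
      by linarith
    then show "c1 * (hmin K + e) powr p * \<nu> \<le> J (\<lambda>u. f u * support_fun K u powr p)"
      unfolding J_def c_def by simp
  qed
qed

end

context fdat begin

lemma Fp_expr:
  "Fp p f K = Vol K * (J (\<lambda>u. f u * support_fun K u powr p) / J f) powr (- real DIM('a) / p)"
proof -
  have "sphere_int (\<lambda>u. f u * support_fun K u powr p) / sphere_int f
        = J (\<lambda>u. f u * support_fun K u powr p) / J f"
    unfolding sphere_int_J by simp
  then show ?thesis unfolding Fp_def by simp
qed

lemma Fp_le:
  assumes "compact K" "K \<noteq> {}" "hmin K > 0" "p < 0"
  shows "Fp p f K \<le> Fminf K"
proof -
  define D where "D = real DIM('a)"
  define a where "a = J (\<lambda>u. f u * support_fun K u powr p)"
  define b where "b = J f"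
  define hm where "hm = hmin K"
  have p0: "p \<le> 0" using assms(4) by simp
  have a0: "a > 0" unfolding a_def by (rule Jgp_pos[OF assms(1-3) p0])
  have b0: "b > 0" unfolding b_def by (rule Jf_pos)
  have ab: "a \<le> hm powr p * b" unfolding a_def b_def hm_def by (rule Jgp_upper[OF assms(1-3) p0])
  have r: "a / b \<le> hm powr p" using ab b0 by (simp add: pos_divide_le_eq)
  have E: "- D / p \<ge> 0" using assms(4) by (simp add: D_def divide_nonneg_neg)
  have "(a / b) powr (- D / p) \<le> (hm powr p) powr (- D / p)"
    using a0 b0 r E by (intro powr_mono2) auto
  also have "\<dots> = hm powr (- D)" using assms(4) by (simp add: powr_powr)
  also have "\<dots> = 1 / hm ^ DIM('a)"
    using assms(3) by (simp add: powr_minus D_def powr_realpow divide_inverse hm_def)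
  finally have "(a / b) powr (- D / p) \<le> 1 / hm ^ DIM('a)" .
  then have "Vol K * (a / b) powr (- D / p) \<le> Vol K * (1 / hm ^ DIM('a))"
    by (rule mult_left_mono) (rule Vol_nonneg)
  then show ?thesis unfolding Fp_expr Fminf_eq a_def b_def D_def hm_def by simp
qed

lemma Fp_lower:
  assumes "compact K" "K \<noteq> {}" "hmin K > 0" "e > 0"
  obtains \<delta> where "\<delta> > 0"
    "\<And>p. p < 0 \<Longrightarrow> Vol K * (hmin K + e) powr (- real DIM('a)) * \<delta> powr (- real DIM('a) / p) \<le> Fp p f K"
proof -
  define D where "D = real DIM('a)"
  define hm where "hm = hmin K"
  define \<mu> where "\<mu> = measure lborel (A0::'a set)"
  obtain \<nu> where nu: "\<nu> > 0"
    "\<And>p. p < 0 \<Longrightarrow> c1 * (hmin K + e) powr p * \<nu> \<le> J (\<lambda>u. f u * support_fun K u powr p)"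
    using Jgp_lower[OF assms] by blast
  have mu: "\<mu> > 0" unfolding \<mu>_def by (rule A0_pos)
  define \<delta> where "\<delta> = c1 * \<nu> / (c2 * \<mu>)"
  have d0: "\<delta> > 0" unfolding \<delta>_def using c1 c2pos nu(1) mu by simp
  show ?thesis
  proof (rule that[OF d0])
    fix p :: real assume p: "p < 0"
    define a where "a = J (\<lambda>u. f u * support_fun K u powr p)"
    define b where "b = J f"
    have a0: "a > 0" unfolding a_def by (rule Jgp_pos[OF assms(1-3)]) (use p in simp)
    have b0: "b > 0" unfolding b_def by (rule Jf_pos)
    have bu: "b \<le> c2 * \<mu>" unfolding b_def \<mu>_def by (rule Jf_bounds(2))
    have al: "c1 * (hm + e) powr p * \<nu> \<le> a" unfolding a_def hm_def by (rule nu(2)[OF p])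
    have hp: "(hm + e) powr p > 0" using assms(3,4) unfolding hm_def by simp
    have "(hm + e) powr p * \<delta> = c1 * (hm + e) powr p * \<nu> / (c2 * \<mu>)"
      unfolding \<delta>_def by simp
    also have "\<dots> \<le> a / (c2 * \<mu>)" using al c2pos mu by (simp add: divide_right_mono)
    also have "\<dots> \<le> a / b" using a0 b0 bu by (simp add: frac_le)
    finally have r: "(hm + e) powr p * \<delta> \<le> a / b" .
    have E: "- D / p \<ge> 0" using p by (simp add: D_def divide_nonneg_neg)
    have "((hm + e) powr p * \<delta>) powr (- D / p) \<le> (a / b) powr (- D / p)"
      using r E hp d0 by (intro powr_mono2) auto
    moreover have "((hm + e) powr p * \<delta>) powr (- D / p) = (hm + e) powr (- D) * \<delta> powr (- D / p)"
      using p hp d0 by (simp add: powr_mult powr_powr)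
    ultimately have "(hm + e) powr (- D) * \<delta> powr (- D / p) \<le> (a / b) powr (- D / p)" by simp
    then have "Vol K * ((hm + e) powr (- D) * \<delta> powr (- D / p)) \<le> Vol K * (a / b) powr (- D / p)"
      by (rule mult_left_mono) (rule Vol_nonneg)
    then show "Vol K * (hmin K + e) powr (- real DIM('a)) * \<delta> powr (- real DIM('a) / p) \<le> Fp p f K"
      unfolding Fp_expr a_def b_def D_def hm_def by (simp add: mult.assoc)
  qed
qed

lemma ev_neg: "eventually (\<lambda>p::real. p < 0) at_bot"
  unfolding eventually_at_bot_dense by blast

lemma Fp_tendsto:
  assumes "compact K" "K \<noteq> {}" "hmin K > 0"
  shows "((\<lambda>p. Fp p f K) \<longlongrightarrow> Fminf K) at_bot"
proof (rule order_tendstoI)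
  fix y assume y: "y > Fminf K"
  show "eventually (\<lambda>p. Fp p f K < y) at_bot"
    using ev_neg by (rule eventually_mono) (use Fp_le[OF assms] y in force)
next
  fix y assume y: "y < Fminf K"
  define D where "D = real DIM('a)"
  define L where "L e = Vol K * (hmin K + e) powr (- D)" for e
  have "(L \<longlongrightarrow> Vol K * (hmin K + 0) powr (- D)) (at_right 0)"
    unfolding L_def using assms(3) by (intro tendsto_intros) auto
  moreover have "Vol K * (hmin K + 0) powr (- D) = Fminf K"
    using assms(3) by (simp add: Fminf_eq powr_minus D_def powr_realpow divide_inverse)
  ultimately have "eventually (\<lambda>e. y < L e) (at_right 0)" using y by (simp add: order_tendstoD(1))
  then obtain b where b: "b > 0" "\<And>e. e > 0 \<Longrightarrow> e < b \<Longrightarrow> y < L e"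
    unfolding eventually_at_right_field by blast
  define e where "e = b / 2"
  have e: "e > 0" "y < L e" using b by (auto simp: e_def)
  obtain \<delta> where d: "\<delta> > 0"
    "\<And>p. p < 0 \<Longrightarrow> Vol K * (hmin K + e) powr (- real DIM('a)) * \<delta> powr (- real DIM('a) / p) \<le> Fp p f K"
    using Fp_lower[OF assms e(1)] by blast
  have lim0: "((\<lambda>p::real. - D / p) \<longlongrightarrow> 0) at_bot"
    by (rule tendsto_divide_0[OF tendsto_const filterlim_mono[OF filterlim_ident order_refl at_bot_le_at_infinity]])
  have "((\<lambda>p. L e * \<delta> powr (- D / p)) \<longlongrightarrow> L e * \<delta> powr 0) at_bot"
    using d(1) by (intro tendsto_intros tendsto_powr[OF tendsto_const lim0]) auto
  then have "((\<lambda>p. L e * \<delta> powr (- D / p)) \<longlongrightarrow> L e) at_bot" using d(1) by simp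
  then have "eventually (\<lambda>p. y < L e * \<delta> powr (- D / p)) at_bot" using e(2) by (rule order_tendstoD(1))
  then show "eventually (\<lambda>p. y < Fp p f K) at_bot"
  proof (rule eventually_elim2[OF _ ev_neg])
    fix p :: real assume "y < L e * \<delta> powr (- D / p)" "p < 0"
    then show "y < Fp p f K" using d(2)[of p] unfolding L_def D_def by linarith
  qed
qed

lemma part1:
  fixes S :: "('a \<Rightarrow> 'a) set"
  assumes os: "orth_subgroup S" and span: "spanning_property S"
  shows "((\<lambda>p. SUP K\<in>K0 S. ereal (Fp p f K)) \<longlongrightarrow> (SUP K\<in>K0 S. ereal (Fminf K))) at_bot"
proof (rule order_tendstoI)
  fix y assume "y < (SUP K\<in>K0 S. ereal (Fminf K))"
  then obtain K where K: "K \<in> K0 S" "y < ereal (Fminf K)" by (auto simp: less_SUP_iff)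
  have "((\<lambda>p. ereal (Fp p f K)) \<longlongrightarrow> ereal (Fminf K)) at_bot"
    by (rule tendsto_ereal[OF Fp_tendsto[OF K0_facts(1,2)[OF K(1)] hmin_pos[OF os span K(1)]]])
  then have "eventually (\<lambda>p. y < ereal (Fp p f K)) at_bot" using K(2) by (rule order_tendstoD(1))
  then show "eventually (\<lambda>p. y < (SUP K\<in>K0 S. ereal (Fp p f K))) at_bot"
  proof (rule eventually_mono)
    fix p assume "y < ereal (Fp p f K)"
    also have "ereal (Fp p f K) \<le> (SUP K\<in>K0 S. ereal (Fp p f K))" using K(1) by (rule SUP_upper)
    finally show "y < (SUP K\<in>K0 S. ereal (Fp p f K))" .
  qed
next
  fix y assume y: "y > (SUP K\<in>K0 S. ereal (Fminf K))"
  show "eventually (\<lambda>p. (SUP K\<in>K0 S. ereal (Fp p f K)) < y) at_bot"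
    using ev_neg
  proof (rule eventually_mono)
    fix p :: real assume p: "p < 0"
    have "(SUP K\<in>K0 S. ereal (Fp p f K)) \<le> (SUP K\<in>K0 S. ereal (Fminf K))"
    proof (rule SUP_subset_mono[OF order_refl])
      fix K assume K: "K \<in> K0 S"
      show "ereal (Fp p f K) \<le> ereal (Fminf K)"
        using Fp_le[OF K0_facts(1,2)[OF K] hmin_pos[OF os span K] p] by simp
    qed
    then show "(SUP K\<in>K0 S. ereal (Fp p f K)) < y" using y by (rule le_less_trans)
  qed
qed

end

lemma hd_bounds:
  fixes A B :: "'a::euclidean_space set"
  assumes "compact A" "compact B" "A \<noteq> {}" "B \<noteq> {}"
  shows "\<And>x. x \<in> A \<Longrightarrow> infdist x B \<le> hausdorff_dist A B"
    and "\<And>y. y \<in> B \<Longrightarrow> infdist y A \<le> hausdorff_dist A B"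
proof -
  have bA: "bdd_above ((\<lambda>a. infdist a B) ` A)"
    by (rule bounded_imp_bdd_above, rule compact_imp_bounded, rule compact_continuous_image)
       (auto intro!: continuous_intros assms)
  have bB: "bdd_above ((\<lambda>b. infdist b A) ` B)"
    by (rule bounded_imp_bdd_above, rule compact_imp_bounded, rule compact_continuous_image)
       (auto intro!: continuous_intros assms)
  show "\<And>x. x \<in> A \<Longrightarrow> infdist x B \<le> hausdorff_dist A B"
  proof -
    fix x assume "x \<in> A"
    then have "infdist x B \<le> (SUP a\<in>A. infdist a B)" using bA by (rule cSUP_upper)
    then show "infdist x B \<le> hausdorff_dist A B" unfolding hausdorff_dist_def by linarith
  qed
  show "\<And>y. y \<in> B \<Longrightarrow> infdist y A \<le> hausdorff_dist A B"
  proof -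
    fix y assume "y \<in> B"
    then have "infdist y A \<le> (SUP b\<in>B. infdist b A)" using bB by (rule cSUP_upper)
    then show "infdist y A \<le> hausdorff_dist A B" unfolding hausdorff_dist_def by linarith
  qed
qed

lemma near_point:
  fixes B :: "'a::euclidean_space set"
  assumes "compact B" "B \<noteq> {}" "infdist x B \<le> d"
  obtains z where "z \<in> B" "dist x z \<le> d"
proof -
  obtain z where "z \<in> B" "infdist x B = dist x z"
    using infdist_attains_inf[OF compact_imp_closed[OF assms(1)] assms(2)] by blast
  then show ?thesis using that assms(3) by auto
qed

lemma orth_image_cball:
  assumes "orth_subgroup S" "\<phi> \<in> S"
  shows "\<phi> ` cball 0 1 = cball (0::'a::euclidean_space) 1"
proof
  show "\<phi> ` cball 0 1 \<subseteq> cball 0 1" using os_facts(6)[OF assms] by auto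
  show "cball 0 1 \<subseteq> \<phi> ` cball 0 1"
  proof
    fix x :: 'a assume x: "x \<in> cball 0 1"
    have "inv \<phi> x \<in> cball 0 1"
      using x os_facts(6)[OF assms(1) os_facts(3)[OF assms], of x] by simp
    moreover have "x = \<phi> (inv \<phi> x)" using os_facts(4)[OF assms] by simp
    ultimately show "x \<in> \<phi> ` cball 0 1" by blast
  qed
qed

lemma cball_K0:
  assumes "orth_subgroup S"
  shows "cball (0::'a::euclidean_space) 1 \<in> K0 S"
  unfolding K0_def convex_body_def using orth_image_cball[OF assms] by auto

lemma J_cong:
  assumes "\<And>u. u \<in> sphere 0 1 \<Longrightarrow> g1 u = g2 u"
  shows "J g1 = J (g2 :: 'a::euclidean_space \<Rightarrow> real)"
  unfolding J_def
  by (rule set_lebesgue_integral_cong) (use assms in \<open>auto simp: A0_def\<close>)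

context fdat begin

lemma cball_Kp:
  assumes "orth_subgroup S"
  shows "cball (0::'a) 1 \<in> Kp p f S"
proof -
  have "J (\<lambda>u. f u * support_fun (cball (0::'a) 1) u powr p) = J f"
    by (rule J_cong) (simp add: sf_ball)
  then show ?thesis unfolding Kp_def using cball_K0[OF assms] by (simp add: sphere_int_J)
qed

lemma scale_bound:
  fixes S :: "('a \<Rightarrow> 'a) set"
  assumes os: "orth_subgroup S" and span: "spanning_property S"
    and K: "K \<in> K0 S" and p: "p < 0"
    and Om: "\<And>K'. K' \<in> Kp p f S \<Longrightarrow> Vol K' \<le> V"
  shows "Fp p f K \<le> V"
proof -
  note Kf = K0_facts[OF K]
  have hm: "hmin K > 0" by (rule hmin_pos[OF os span K])
  define D where "D = real DIM('a)"
  define a where "a = J (\<lambda>u. f u * support_fun K u powr p)"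
  define b where "b = J f"
  have a0: "a > 0" unfolding a_def by (rule Jgp_pos[OF Kf(1,2) hm]) (use p in simp)
  have b0: "b > 0" unfolding b_def by (rule Jf_pos)
  define t where "t = (a / b) powr (- 1 / p)"
  have t0: "t > 0" unfolding t_def using a0 b0 by simp
  define K' where "K' = (\<lambda>x. t *\<^sub>R x) ` K"
  have K'c: "compact K'" unfolding K'_def by (rule compact_scaling[OF Kf(1)])
  have K'cv: "convex K'" unfolding K'_def by (rule convex_scaling[OF Kf(4)])
  have K'0: "0 \<in> K'" unfolding K'_def using Kf(3) by (metis image_eqI scaleR_zero_right)
  have K'i: "interior K' \<noteq> {}"
  proof -
    have "open ((\<lambda>x. t *\<^sub>R x) ` interior K)" using t0 by (intro open_scaling) auto
    moreover have "(\<lambda>x. t *\<^sub>R x) ` interior K \<subseteq> K'" unfolding K'_def using interior_subset by blast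
    ultimately have "(\<lambda>x. t *\<^sub>R x) ` interior K \<subseteq> interior K'" by (intro interior_maximal)
    then show ?thesis using Kf(5) by blast
  qed
  have K'inv: "\<phi> ` K' = K'" if "\<phi> \<in> S" for \<phi>
  proof -
    have "\<phi> ` K' = (\<lambda>x. t *\<^sub>R x) ` (\<phi> ` K)" unfolding K'_def image_image
      using os_facts(2)[OF os that] by (simp add: linear_scale)
    then show ?thesis using Kf(6)[OF that] K'_def by simp
  qed
  have K'K0: "K' \<in> K0 S" unfolding K0_def convex_body_def using K'c K'cv K'0 K'i K'inv by blast
  have hsc: "support_fun K' u = t * support_fun K u" for u
    unfolding K'_def by (rule sf_scale[OF Kf(1,2) t0])
  have "(\<lambda>u. f u * support_fun K' u powr p) = (\<lambda>u. t powr p * (f u * support_fun K u powr p))"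
  proof (rule ext)
    fix u
    have "support_fun K u \<ge> 0" by (rule sf_nonneg[OF Kf(1,3)])
    then show "f u * support_fun K' u powr p = t powr p * (f u * support_fun K u powr p)"
      unfolding hsc using t0 by (simp add: powr_mult)
  qed
  then have "J (\<lambda>u. f u * support_fun K' u powr p) = J (\<lambda>u. t powr p * (f u * support_fun K u powr p))"
    by (rule arg_cong)
  also have "\<dots> = t powr p * a" unfolding J_def a_def by (rule set_integral_mult_right)
  also have "t powr p = b / a"
  proof -
    have "t powr p = (a / b) powr ((- 1 / p) * p)" unfolding t_def by (rule powr_powr)
    also have "(- 1 / p) * p = - 1" using p by simp
    also have "(a / b) powr (- 1) = b / a" using a0 b0 by (simp add: powr_minus)
    finally show ?thesis .
  qed
  also have "b / a * a = b" using a0 by simp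
  finally have "J (\<lambda>u. f u * support_fun K' u powr p) = J f" unfolding b_def .
  then have "K' \<in> Kp p f S" unfolding Kp_def using K'K0 by (simp add: sphere_int_J)
  then have le: "Vol K' \<le> V" by (rule Om)
  have "Vol K' = t ^ DIM('a) * Vol K"
    unfolding Vol_def K'_def using measure_lebesgue_affine[of t 0 K] t0 by simp
  also have "t ^ DIM('a) = (a / b) powr (- D / p)"
    unfolding t_def D_def using a0 b0 by (simp add: powr_realpow[symmetric] powr_powr)
  finally have "Vol K' = Fp p f K" unfolding Fp_expr a_def b_def D_def by simp
  then show ?thesis using le by simp
qed

lemma Fp_Kp:
  assumes "K \<in> Kp p f S"
  shows "Fp p f K = Vol K"
proof -
  have "sphere_int (\<lambda>u. f u * support_fun K u powr p) = sphere_int f" using assms unfolding Kp_def by simp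
  moreover have "sphere_int f \<noteq> 0" unfolding sphere_int_J using Jf_pos by simp
  ultimately show ?thesis unfolding Fp_def by simp
qed

end

locale p2 = fdat f c1 c2 for f :: "'a::euclidean_space \<Rightarrow> real" and c1 c2 :: real +
  fixes S :: "('a \<Rightarrow> 'a) set" and pk :: "nat \<Rightarrow> real" and Om :: "nat \<Rightarrow> 'a set" and Oi :: "'a set"
  assumes os: "orth_subgroup S" and span: "spanning_property S"
    and pneg: "\<And>k. pk k < - real DIM('a)"
    and plim: "filterlim pk at_bot sequentially"
    and OmKp: "\<And>k. Om k \<in> Kp (pk k) f S"
    and Ommax: "\<And>k K. K \<in> Kp (pk k) f S \<Longrightarrow> Vol K \<le> Vol (Om k)"
    and ci: "compact Oi" and nei: "Oi \<noteq> {}"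
    and hlim: "(\<lambda>k. hausdorff_dist (Om k) Oi) \<longlonglongrightarrow> 0"
begin

lemma Om_K0: "Om k \<in> K0 S" using OmKp[of k] unfolding Kp_def by blast

lemma Om_c: "compact (Om k)" "Om k \<noteq> {}" using K0_facts(1,2)[OF Om_K0] by auto

lemma near1: "x \<in> Om k \<Longrightarrow> infdist x Oi \<le> hausdorff_dist (Om k) Oi"
  by (rule hd_bounds(1)[OF Om_c(1) ci Om_c(2) nei])

lemma near2:
  assumes "y \<in> Oi"
  obtains z where "z \<in> Om k" "dist y z \<le> hausdorff_dist (Om k) Oi"
  using near_point[OF Om_c(1,2) hd_bounds(2)[OF Om_c(1) ci Om_c(2) nei assms]] by blast

lemma lim_in:
  assumes "\<And>k. zk k \<in> Om k" "zk \<longlonglongrightarrow> z"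
  shows "z \<in> Oi"
proof -
  have le: "infdist z Oi \<le> dist z (zk k) + hausdorff_dist (Om k) Oi" for k
    using infdist_triangle[of z Oi "zk k"] near1[OF assms(1)[of k]] by (simp add: dist_commute)
  have "(\<lambda>k. dist z (zk k)) \<longlonglongrightarrow> dist z z" by (rule tendsto_dist[OF tendsto_const assms(2)])
  then have "(\<lambda>k. dist z (zk k) + hausdorff_dist (Om k) Oi) \<longlonglongrightarrow> 0 + 0"
    using hlim by (intro tendsto_add) auto
  then have L: "(\<lambda>k. dist z (zk k) + hausdorff_dist (Om k) Oi) \<longlonglongrightarrow> 0" by simp
  have "infdist z Oi \<le> 0"
    by (rule tendsto_le[OF trivial_limit_sequentially L tendsto_const]) (use le in auto)
  then have "infdist z Oi = 0" using infdist_nonneg[of z Oi] by linarith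
  then show ?thesis using in_closed_iff_infdist_zero[OF compact_imp_closed[OF ci] nei] by blast
qed

lemma approx:
  assumes "z \<in> Oi"
  obtains zk where "\<And>k. zk k \<in> Om k" "zk \<longlonglongrightarrow> z"
proof -
  have "\<forall>k. \<exists>w. w \<in> Om k \<and> dist z w \<le> hausdorff_dist (Om k) Oi"
  proof
    fix k
    obtain w where "w \<in> Om k" "dist z w \<le> hausdorff_dist (Om k) Oi" using near2[OF assms] by blast
    then show "\<exists>w. w \<in> Om k \<and> dist z w \<le> hausdorff_dist (Om k) Oi" by blast
  qed
  then have "\<exists>zk. \<forall>k. zk k \<in> Om k \<and> dist z (zk k) \<le> hausdorff_dist (Om k) Oi" by (rule choice)
  then obtain zk where zk0: "\<forall>k. zk k \<in> Om k \<and> dist z (zk k) \<le> hausdorff_dist (Om k) Oi" by (elim exE)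
  have zk: "\<And>k. zk k \<in> Om k" "\<And>k. dist z (zk k) \<le> hausdorff_dist (Om k) Oi"
    using zk0 by simp_all
  have "(\<lambda>k. dist (zk k) z) \<longlonglongrightarrow> 0"
  proof (rule tendsto_sandwich[OF _ _ tendsto_const hlim])
    show "\<forall>\<^sub>F k in sequentially. 0 \<le> dist (zk k) z" by simp
    show "\<forall>\<^sub>F k in sequentially. dist (zk k) z \<le> hausdorff_dist (Om k) Oi"
      using zk(2) by (simp add: dist_commute)
  qed
  then have "zk \<longlonglongrightarrow> z" by (rule iffD2[OF tendsto_dist_iff])
  then show ?thesis using zk(1) that by blast
qed

lemma Oi_convex: "convex Oi"
proof (rule convexI)
  fix x y :: 'a and u v :: real
  assume xy: "x \<in> Oi" "y \<in> Oi" and uv: "0 \<le> u" "0 \<le> v" "u + v = 1"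
  obtain xk where xk: "\<And>k. xk k \<in> Om k" "xk \<longlonglongrightarrow> x" using approx[OF xy(1)] by blast
  obtain yk where yk: "\<And>k. yk k \<in> Om k" "yk \<longlonglongrightarrow> y" using approx[OF xy(2)] by blast
  show "u *\<^sub>R x + v *\<^sub>R y \<in> Oi"
  proof (rule lim_in)
    show "u *\<^sub>R xk k + v *\<^sub>R yk k \<in> Om k" for k
      by (rule convexD[OF K0_facts(4)[OF Om_K0] xk(1) yk(1) uv])
    show "(\<lambda>k. u *\<^sub>R xk k + v *\<^sub>R yk k) \<longlonglongrightarrow> u *\<^sub>R x + v *\<^sub>R y"
      by (intro tendsto_intros xk(2) yk(2))
  qed
qed

lemma Oi_0: "0 \<in> Oi"
  by (rule lim_in[of "\<lambda>k. 0"]) (auto intro: K0_facts(3)[OF Om_K0])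

lemma Oi_sub:
  assumes "\<phi> \<in> S" shows "\<phi> ` Oi \<subseteq> Oi"
proof
  fix w assume "w \<in> \<phi> ` Oi"
  then obtain z where z: "z \<in> Oi" "w = \<phi> z" by blast
  obtain zk where zk: "\<And>k. zk k \<in> Om k" "zk \<longlonglongrightarrow> z" using approx[OF z(1)] by blast
  have bl: "bounded_linear \<phi>" using os_facts(2)[OF os assms] by (simp add: linear_conv_bounded_linear)
  show "w \<in> Oi"
  proof (rule lim_in)
    show "\<phi> (zk k) \<in> Om k" for k
    proof -
      have "\<phi> (zk k) \<in> \<phi> ` Om k" by (rule imageI[OF zk(1)])
      then show ?thesis unfolding K0_facts(6)[OF Om_K0 assms] .
    qed
    show "(\<lambda>k. \<phi> (zk k)) \<longlonglongrightarrow> w" unfolding z(2) by (rule bounded_linear.tendsto[OF bl zk(2)])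
  qed
qed

lemma Oi_inv:
  assumes "\<phi> \<in> S" shows "\<phi> ` Oi = Oi"
proof
  show "\<phi> ` Oi \<subseteq> Oi" by (rule Oi_sub[OF assms])
  show "Oi \<subseteq> \<phi> ` Oi"
  proof
    fix z assume z: "z \<in> Oi"
    have "inv \<phi> z \<in> Oi" by (rule subsetD[OF Oi_sub[OF os_facts(3)[OF os assms]] imageI[OF z]])
    moreover have "z = \<phi> (inv \<phi> z)" using os_facts(4)[OF os assms] by simp
    ultimately show "z \<in> \<phi> ` Oi" by blast
  qed
qed

definition N :: "nat \<Rightarrow> 'a set" where "N j = {x. infdist x Oi \<le> 1 / real (Suc j)}"

lemma N_compact: "compact (N j)"
  unfolding N_def by (rule compact_infdist_le[OF nei ci]) simp

lemma N_inter: "(\<Inter>j. N j) = Oi"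
proof
  show "Oi \<subseteq> (\<Inter>j. N j)" unfolding N_def by auto
  show "(\<Inter>j. N j) \<subseteq> Oi"
  proof
    fix x assume x: "x \<in> (\<Inter>j. N j)"
    have "infdist x Oi \<le> 0"
    proof (rule ccontr)
      assume "\<not> infdist x Oi \<le> 0"
      then obtain n where "inverse (real (Suc n)) < infdist x Oi"
        using reals_Archimedean[of "infdist x Oi"] by auto
      moreover have "infdist x Oi \<le> 1 / real (Suc n)" using x unfolding N_def by blast
      ultimately show False by (simp add: inverse_eq_divide)
    qed
    then have "infdist x Oi = 0" using infdist_nonneg[of x Oi] by linarith
    then show "x \<in> Oi" using in_closed_iff_infdist_zero[OF compact_imp_closed[OF ci] nei] by blast
  qed
qed

lemma N_dec: "decseq N"
proof (rule decseq_SucI)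
  fix j
  have "1 / real (Suc (Suc j)) \<le> 1 / real (Suc j)" by (simp add: frac_le)
  then show "N (Suc j) \<subseteq> N j" unfolding N_def by auto
qed

lemma N_lim: "(\<lambda>j. measure lebesgue (N j)) \<longlonglongrightarrow> measure lebesgue Oi"
proof -
  have "(\<lambda>j. measure lebesgue (N j)) \<longlonglongrightarrow> measure lebesgue (\<Inter>j. N j)"
  proof (rule Lim_measure_decseq)
    show "range N \<subseteq> sets lebesgue"
    proof
      fix x assume "x \<in> range N"
      then obtain j where "x = N j" by blast
      then show "x \<in> sets lebesgue" using fmeasurableD[OF lmeasurable_compact[OF N_compact, of j]] by simp
    qed
    show "decseq N" by (rule N_dec)
    show "emeasure lebesgue (N j) \<noteq> \<infinity>" for j
      using fmeasurableD2[OF lmeasurable_compact[OF N_compact, of j]] by simp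
  qed
  then show ?thesis unfolding N_inter .
qed

lemma usc:
  assumes "e > 0"
  shows "eventually (\<lambda>k. measure lebesgue (Om k) \<le> measure lebesgue Oi + e) sequentially"
proof -
  have "eventually (\<lambda>j. measure lebesgue (N j) < measure lebesgue Oi + e) sequentially"
    using N_lim assms by (intro order_tendstoD(2)) auto
  then obtain j where j: "measure lebesgue (N j) < measure lebesgue Oi + e"
    unfolding eventually_sequentially by blast
  have "eventually (\<lambda>k. hausdorff_dist (Om k) Oi < 1 / real (Suc j)) sequentially"
    using hlim by (intro order_tendstoD(2)) auto
  then show ?thesis
  proof (rule eventually_mono)
    fix k assume k: "hausdorff_dist (Om k) Oi < 1 / real (Suc j)"
    have "Om k \<subseteq> N j"
    proof
      fix x assume "x \<in> Om k"
      then have "infdist x Oi \<le> 1 / real (Suc j)" using near1[of x k] k by linarith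
      then show "x \<in> N j" unfolding N_def by simp
    qed
    then have "measure lebesgue (Om k) \<le> measure lebesgue (N j)"
      by (rule measure_mono_fmeasurable[OF _ fmeasurableD[OF lmeasurable_compact[OF Om_c(1)]] lmeasurable_compact[OF N_compact]])
    then show "measure lebesgue (Om k) \<le> measure lebesgue Oi + e" using j by linarith
  qed
qed

lemma cball_meas_pos: "measure lebesgue (cball (0::'a) 1) > 0"
proof -
  have "\<not> negligible (cball (0::'a) 1)"
    using negligible_convex_interior[OF convex_cball, of "0::'a" 1] by simp
  then have "measure lebesgue (cball (0::'a) 1) \<noteq> 0"
    using negligible_iff_measure0[OF lmeasurable_compact[OF compact_cball]] by blast
  then show ?thesis by (simp add: order_less_le)
qed

lemma vol_lb: "measure lebesgue (cball (0::'a) 1) \<le> measure lebesgue (Om k)"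
proof -
  have "Vol (cball (0::'a) 1) \<le> Vol (Om k)" by (rule Ommax[OF cball_Kp[OF os]])
  then show ?thesis unfolding Vol_def by simp
qed

lemma Oi_meas: "measure lebesgue (cball (0::'a) 1) \<le> measure lebesgue Oi"
proof (rule field_le_epsilon)
  fix e :: real assume e: "e > 0"
  obtain k where "measure lebesgue (Om k) \<le> measure lebesgue Oi + e"
    using usc[OF e] unfolding eventually_sequentially by blast
  then show "measure lebesgue (cball (0::'a) 1) \<le> measure lebesgue Oi + e" using vol_lb[of k] by linarith
qed

lemma Oi_K0: "Oi \<in> K0 S"
proof -
  have "measure lebesgue Oi \<noteq> 0" using Oi_meas cball_meas_pos by linarith
  then have "\<not> negligible Oi" using negligible_iff_measure0[OF lmeasurable_compact[OF ci]] by blast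
  then have "interior Oi \<noteq> {}" using negligible_convex_interior[OF Oi_convex] by blast
  then show ?thesis unfolding K0_def convex_body_def using ci Oi_convex Oi_0 Oi_inv by blast
qed

lemma hmin_Om: "hmin Oi - hausdorff_dist (Om k) Oi \<le> hmin (Om k)"
proof -
  obtain u0 where u0: "u0 \<in> sphere 0 1" "support_fun (Om k) u0 = hmin (Om k)"
    using hmin_props(1)[OF Om_c] by blast
  obtain y where y: "y \<in> Oi" "support_fun Oi u0 = y \<bullet> u0" using sf_att[OF ci nei] by blast
  obtain z where z: "z \<in> Om k" "dist y z \<le> hausdorff_dist (Om k) Oi" using near2[OF y(1)] by blast
  have "z \<bullet> u0 \<le> support_fun (Om k) u0" by (rule sf_ge[OF Om_c z(1)])
  moreover have "z \<bullet> u0 = y \<bullet> u0 - (y - z) \<bullet> u0" by (simp add: inner_diff_left)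
  moreover have "(y - z) \<bullet> u0 \<le> dist y z"
    using norm_cauchy_schwarz[of "y - z" u0] u0(1) by (simp add: dist_norm)
  moreover have "hmin Oi \<le> support_fun Oi u0" by (rule hmin_props(2)[OF ci nei u0(1)])
  ultimately show ?thesis using z(2) u0(2) y(2) by linarith
qed

lemma final:
  assumes K: "K \<in> K0 S"
  shows "Fminf K \<le> Fminf Oi"
proof (rule field_le_epsilon)
  fix e :: real assume e: "e > 0"
  define D where "D = real DIM('a)"
  define \<mu> where "\<mu> = measure lebesgue Oi"
  define hm where "hm = hmin Oi"
  have hm0: "hm > 0" unfolding hm_def by (rule hmin_pos[OF os span Oi_K0])
  have D0: "D > 0" unfolding D_def by simp
  define \<eta> where "\<eta> = e * hm ^ DIM('a) / D"
  have eta0: "\<eta> > 0" unfolding \<eta>_def using e hm0 D0 by simp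
  define R where "R k = D * (\<mu> + \<eta>) / (hm - hausdorff_dist (Om k) Oi) ^ DIM('a)" for k
  have "R \<longlonglongrightarrow> D * (\<mu> + \<eta>) / (hm - 0) ^ DIM('a)"
    unfolding R_def using hm0 by (intro tendsto_intros hlim) auto
  moreover have "D * (\<mu> + \<eta>) / (hm - 0) ^ DIM('a) = Fminf Oi + e"
  proof -
    have F: "Fminf Oi = D * \<mu> / hm ^ DIM('a)" unfolding Fminf_eq Vol_def \<mu>_def hm_def D_def by simp
    have "D * (\<mu> + \<eta>) / (hm - 0) ^ DIM('a) = D * \<mu> / hm ^ DIM('a) + D * \<eta> / hm ^ DIM('a)"
      by (simp add: distrib_left add_divide_distrib)
    also have "D * \<eta> / hm ^ DIM('a) = e" unfolding \<eta>_def using hm0 D0 by simp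
    finally show ?thesis using F by simp
  qed
  ultimately have Rlim: "R \<longlonglongrightarrow> Fminf Oi + e" by simp
  have Llim: "(\<lambda>k. Fp (pk k) f K) \<longlonglongrightarrow> Fminf K"
    by (rule filterlim_compose[OF Fp_tendsto[OF K0_facts(1,2)[OF K] hmin_pos[OF os span K]] plim])
  have ev1: "eventually (\<lambda>k. hausdorff_dist (Om k) Oi < hm) sequentially"
    using hlim hm0 by (intro order_tendstoD(2)) auto
  have ev: "eventually (\<lambda>k. Fp (pk k) f K \<le> R k) sequentially"
    using ev1 usc[OF eta0]
  proof (rule eventually_elim2)
    fix k assume dk: "hausdorff_dist (Om k) Oi < hm" and mk: "measure lebesgue (Om k) \<le> measure lebesgue Oi + \<eta>"
    have pk0: "pk k < 0" using pneg[of k] by simp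
    have "Fp (pk k) f K \<le> Vol (Om k)" by (rule scale_bound[OF os span K pk0 Ommax])
    also have "Vol (Om k) = Fp (pk k) f (Om k)" by (rule Fp_Kp[OF OmKp, symmetric])
    also have "\<dots> \<le> Fminf (Om k)" by (rule Fp_le[OF Om_c hmin_pos[OF os span Om_K0] pk0])
    also have "\<dots> = Vol (Om k) / hmin (Om k) ^ DIM('a)" by (rule Fminf_eq)
    also have "\<dots> \<le> R k" unfolding R_def
    proof (rule frac_le)
      show "0 \<le> D * (\<mu> + \<eta>)" using D0 eta0 unfolding \<mu>_def by simp
      show "Vol (Om k) \<le> D * (\<mu> + \<eta>)" unfolding Vol_def D_def[symmetric] \<mu>_def using mk D0 by simp
      show "0 < (hm - hausdorff_dist (Om k) Oi) ^ DIM('a)" using dk by simp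
      show "(hm - hausdorff_dist (Om k) Oi) ^ DIM('a) \<le> hmin (Om k) ^ DIM('a)"
        using dk hmin_Om[of k] unfolding hm_def by (intro power_mono) auto
    qed
    finally show "Fp (pk k) f K \<le> R k" .
  qed
  show "Fminf K \<le> Fminf Oi + e"
    by (rule tendsto_le[OF trivial_limit_sequentially Rlim Llim ev])
qed

end

theorem lemma4p1:
  fixes S :: "('a::euclidean_space \<Rightarrow> 'a) set"
    and f :: "'a \<Rightarrow> real" and c1 c2 :: real
  assumes dim: "DIM('a) \<ge> 2"
    and disc: "discrete_orth_subgroup S"
    and span: "spanning_property S"
    and meas: "f \<in> borel_measurable (restrict_space borel (sphere 0 1))"
    and inv: "\<And>\<phi> u. \<phi> \<in> S \<Longrightarrow> u \<in> sphere 0 1 \<Longrightarrow> f (\<phi> u) = f u"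
    and c1: "c1 > 0" and c2: "c2 > 0"
    and bnd: "\<And>u. u \<in> sphere 0 1 \<Longrightarrow> c1 \<le> f u \<and> f u \<le> c2"
  shows "((\<lambda>p. SUP K\<in>K0 S. ereal (Fp p f K)) \<longlongrightarrow> (SUP K\<in>K0 S. ereal (Fminf K))) at_bot
     \<and> (\<forall>(pk :: nat \<Rightarrow> real) (\<Omega> :: nat \<Rightarrow> 'a set) \<Omega>inf.
          (\<forall>k. pk k < - real DIM('a)) \<and> filterlim pk at_bot sequentially \<and>
          (\<forall>k. \<Omega> k \<in> Kp (pk k) f S \<and> (\<forall>K\<in>Kp (pk k) f S. Vol K \<le> Vol (\<Omega> k))) \<and>
          compact \<Omega>inf \<and> \<Omega>inf \<noteq> {} \<and>
          (\<lambda>k. hausdorff_dist (\<Omega> k) \<Omega>inf) \<longlonglongrightarrow> 0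
          \<longrightarrow> \<Omega>inf \<in> K0 S \<and> (\<forall>K\<in>K0 S. Fminf K \<le> Fminf \<Omega>inf))"
proof -
  have os: "orth_subgroup S" using disc unfolding discrete_orth_subgroup_def by blast
  interpret fd: fdat f c1 c2
  proof
    show "f \<in> borel_measurable (restrict_space borel (sphere 0 1))" by (rule meas)
    show "c1 > 0" by (rule c1)
    show "\<And>u. u \<in> sphere 0 1 \<Longrightarrow> c1 \<le> f u \<and> f u \<le> c2" by (rule bnd)
  qed
  have P1: "((\<lambda>p. SUP K\<in>K0 S. ereal (Fp p f K)) \<longlongrightarrow> (SUP K\<in>K0 S. ereal (Fminf K))) at_bot"
    by (rule fd.part1[OF os span])
  have P2: "\<Omega>inf \<in> K0 S \<and> (\<forall>K\<in>K0 S. Fminf K \<le> Fminf \<Omega>inf)"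
    if H: "(\<forall>k. pk k < - real DIM('a)) \<and> filterlim pk at_bot sequentially \<and>
          (\<forall>k. \<Omega> k \<in> Kp (pk k) f S \<and> (\<forall>K\<in>Kp (pk k) f S. Vol K \<le> Vol (\<Omega> k))) \<and>
          compact \<Omega>inf \<and> \<Omega>inf \<noteq> {} \<and>
          (\<lambda>k. hausdorff_dist (\<Omega> k) \<Omega>inf) \<longlonglongrightarrow> 0"
    for pk :: "nat \<Rightarrow> real" and \<Omega> :: "nat \<Rightarrow> 'a set" and \<Omega>inf
  proof -
    interpret q: p2 f c1 c2 S pk \<Omega> \<Omega>inf
    proof (unfold_locales)
      show "orth_subgroup S" by (rule os)
      show "spanning_property S" by (rule span)
      show "\<And>k. pk k < - real DIM('a)" using H by blast
      show "filterlim pk at_bot sequentially" using H by blast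
      show "\<And>k. \<Omega> k \<in> Kp (pk k) f S" using H by blast
      show "\<And>k K. K \<in> Kp (pk k) f S \<Longrightarrow> Vol K \<le> Vol (\<Omega> k)" using H by blast
      show "compact \<Omega>inf" using H by blast
      show "\<Omega>inf \<noteq> {}" using H by blast
      show "(\<lambda>k. hausdorff_dist (\<Omega> k) \<Omega>inf) \<longlonglongrightarrow> 0" using H by blast
    qed
    show ?thesis using q.Oi_K0 q.final by blast
  qed
  show ?thesis using P1 P2 by blast
qed

end
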